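(* Let $f$ be a smooth real function on $\{x\in\mathbb{R}^n:|x-x_0|<\rho_0\}$, let $M(k)=\max_{|\alpha|=k}\sup|\partial^\alpha f|$ (supremum over this domain), and assume $\mathfrak{H}(x_0)\ge\nu_{x_0}I$ with $0<\nu_{x_0}<1$, where $\mathfrak{H}$ is the Hessian of $f$. There is a sufficiently small constant $c(n)>0$ such that, with $\nu_1:=c(n)\nu_{x_0}(1+M(2)+M(3))^{-1}$, the following holds. Let $h\in\mathbb{R}^n$ with $0<\|h\|<\min(\rho_0,\nu_1^6)$, and assume $$|f(x_0+h)-f(x_0)|\le\|h\|^3,\qquad\|\nabla f(x_0+h)-\lambda\nabla f(x_0)\|\le\|h\|^2$$ for some $\lambda\in\mathbb{R}$. Then $$\|h+2\mathfrak{H}(x_0)^{-1}\nabla f(x_0)\|\le\nu_1^{-8}\|\nabla f(x_0)\|^2.$$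
   Context: $|\cdot|$ is the sup-norm and $\|\cdot\|$ the Euclidean norm on $\mathbb{R}^n$. *)

theory Defs
  imports "HOL-Analysis.Analysis"
begin

text \<open>Iterated partial derivatives: pd [i1,...,ik] f = d_i1 ... d_ik f.
  A list of length k of coordinate indices encodes a multi-index of order k.\<close>
primrec pd :: "'n::finite list \<Rightarrow> (real^'n \<Rightarrow> real) \<Rightarrow> real^'n \<Rightarrow> real" where
  "pd [] f = f"
| "pd (i # is) f = (\<lambda>x. frechet_derivative (pd is f) (at x) (axis i 1))"

definition smooth_on :: "(real^'n::finite) set \<Rightarrow> (real^'n \<Rightarrow> real) \<Rightarrow> bool" where
  "smooth_on S f \<longleftrightarrow> (\<forall>is. \<forall>x\<in>S. pd is f differentiable (at x))"

definition supball :: "real^'n::finite \<Rightarrow> real \<Rightarrow> (real^'n) set" where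
  "supball x0 r = {x. infnorm (x - x0) < r}"

definition Mder :: "(real^'n::finite) set \<Rightarrow> (real^'n \<Rightarrow> real) \<Rightarrow> nat \<Rightarrow> real" where
  "Mder S f k = Sup {\<bar>pd is f x\<bar> | is x. length is = k \<and> x \<in> S}"

definition grad :: "(real^'n::finite \<Rightarrow> real) \<Rightarrow> real^'n \<Rightarrow> real^'n" where
  "grad f x = (\<chi> i. pd [i] f x)"

definition hess :: "(real^'n::finite \<Rightarrow> real) \<Rightarrow> real^'n \<Rightarrow> real^'n^'n" where
  "hess f x = (\<chi> i j. pd [i, j] f x)"

definition mat_ge_scalar :: "real^'n::finite^'n \<Rightarrow> real \<Rightarrow> bool" where
  "mat_ge_scalar H \<nu> \<longleftrightarrow> (\<forall>v. v \<bullet> (H *v v) \<ge> \<nu> * (v \<bullet> v))"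

end

theory Submission
  imports Defs
begin

lemma pd_has_derivative:
  assumes "smooth_on S f" "x \<in> S"
  shows "(pd is f has_derivative (\<lambda>v. \<Sum>j\<in>UNIV. v$j * pd (j#is) f x)) (at x)"
proof -
  have d: "pd is f differentiable (at x)" using assms unfolding smooth_on_def by blast
  let ?D = "frechet_derivative (pd is f) (at x)"
  have hd: "(pd is f has_derivative ?D) (at x)" using d frechet_derivative_works by blast
  have lin: "linear ?D" using hd has_derivative_linear by blast
  have "?D v = (\<Sum>j\<in>UNIV. v$j * pd (j#is) f x)" for v
  proof -
    have "?D v = ?D (\<Sum>j\<in>UNIV. v$j *\<^sub>R axis j 1)"
      using basis_expansion[of v] by (simp add: scalar_mult_eq_scaleR)
    also have "\<dots> = (\<Sum>j\<in>UNIV. v$j * ?D (axis j 1))"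
      using lin by (simp add: linear_sum linear_scale)
    finally show ?thesis by simp
  qed
  then have "?D = (\<lambda>v. \<Sum>j\<in>UNIV. v$j * pd (j#is) f x)" by (rule ext)
  then show ?thesis using hd by simp
qed

lemma pd_line_deriv:
  assumes "smooth_on S f" "y + t *\<^sub>R v \<in> S"
  shows "((\<lambda>t. pd is f (y + t *\<^sub>R v)) has_real_derivative
           (\<Sum>j\<in>UNIV. v$j * pd (j#is) f (y + t *\<^sub>R v))) (at t)"
proof -
  have l: "((\<lambda>t. y + t *\<^sub>R v) has_derivative (\<lambda>t. t *\<^sub>R v)) (at t)"
    by (auto intro!: derivative_eq_intros)
  have c: "((\<lambda>t. pd is f (y + t *\<^sub>R v)) has_derivative
      (\<lambda>s. \<Sum>j\<in>UNIV. (s *\<^sub>R v)$j * pd (j#is) f (y + t *\<^sub>R v))) (at t)"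
    using diff_chain_at[OF l pd_has_derivative[OF assms]] by (simp add: o_def)
  show ?thesis unfolding has_field_derivative_def
    by (rule has_derivative_eq_rhs[OF c]) (auto simp: fun_eq_iff sum_distrib_left mult_ac)
qed

primrec Ld :: "(real^'n::finite \<Rightarrow> real) \<Rightarrow> real^'n \<Rightarrow> real^'n \<Rightarrow> nat \<Rightarrow> 'n list \<Rightarrow> real \<Rightarrow> real" where
  "Ld f y v 0 is = (\<lambda>t. pd is f (y + t *\<^sub>R v))"
| "Ld f y v (Suc m) is = (\<lambda>t. \<Sum>j\<in>UNIV. v$j * Ld f y v m (j#is) t)"

lemma Ld_deriv:
  assumes "smooth_on S f" "y + t *\<^sub>R v \<in> S"
  shows "(Ld f y v m is has_real_derivative Ld f y v (Suc m) is t) (at t)"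
  using assms
proof (induction m arbitrary: "is")
  case 0
  then show ?case using pd_line_deriv[OF assms] by simp
next
  case (Suc m)
  have "((\<lambda>t. \<Sum>j\<in>UNIV. v$j * Ld f y v m (j#is) t) has_real_derivative
          (\<Sum>j\<in>UNIV. v$j * Ld f y v (Suc m) (j#is) t)) (at t)"
    by (intro DERIV_sum DERIV_cmult Suc.IH assms)
  then show ?case by simp
qed

lemma Mder_upper:
  assumes "bdd_above {\<bar>pd is f x\<bar> | is x. length is = k \<and> x \<in> S}" "length is = k" "x \<in> S"
  shows "\<bar>pd is f x\<bar> \<le> Mder S f k"
  unfolding Mder_def by (rule cSup_upper) (use assms in auto)

lemma Mder_nonneg:
  fixes f :: "real^'n::finite \<Rightarrow> real" and "is" :: "'n list"
  assumes "bdd_above {\<bar>pd is f x\<bar> | is x. length is = k \<and> x \<in> S}" "length is = k" "x \<in> S"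
  shows "0 \<le> Mder S f k"
proof -
  have "\<bar>pd is f x\<bar> \<le> Mder S f k" unfolding Mder_def by (rule cSup_upper) (use assms in auto)
  then show ?thesis by linarith
qed

lemma Ld_bound:
  assumes "y + t *\<^sub>R v \<in> S" "bdd_above {\<bar>pd is f x\<bar> | is x. length is = m + length is0 \<and> x \<in> S}"
  shows "\<bar>Ld f y v m is0 t\<bar> \<le> (\<Sum>j\<in>UNIV. \<bar>v$j\<bar>)^m * Mder S f (m + length is0)"
  using assms
proof (induction m arbitrary: is0)
  case 0
  then show ?case using Mder_upper[of f "length is0" S is0 "y + t *\<^sub>R v"] by simp
next
  case (Suc m)
  let ?s = "\<Sum>j\<in>UNIV. \<bar>v$j\<bar>"
  let ?M = "Mder S f (Suc m + length is0)"
  have IH: "\<bar>Ld f y v m (j#is0) t\<bar> \<le> ?s^m * ?M" for j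
    using Suc.IH[of "j#is0"] Suc.prems by simp
  have "\<bar>Ld f y v (Suc m) is0 t\<bar> \<le> (\<Sum>j\<in>UNIV. \<bar>v$j\<bar> * \<bar>Ld f y v m (j#is0) t\<bar>)"
    by (simp add: sum_abs[THEN order_trans] abs_mult)
  also have "\<dots> \<le> (\<Sum>j\<in>UNIV. \<bar>v$j\<bar> * (?s^m * ?M))"
    by (intro sum_mono mult_left_mono IH) auto
  also have "\<dots> = ?s^Suc m * ?M" by (simp add: sum_distrib_right[symmetric] mult_ac)
  finally show ?case .
qed

lemma Ld_taylor:
  assumes "smooth_on S f" "\<And>t. 0 \<le> t \<Longrightarrow> t \<le> 1 \<Longrightarrow> y + t *\<^sub>R v \<in> S" "0 < m"
  shows "\<exists>\<xi>. 0 < \<xi> \<and> \<xi> < 1 \<and>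
     Ld f y v 0 is 1 = (\<Sum>k<m. Ld f y v k is 0 / fact k) + Ld f y v m is \<xi> / fact m"
  using Maclaurin[of 1 m "\<lambda>k. Ld f y v k is" "Ld f y v 0 is"] Ld_deriv[OF assms(1) assms(2)] assms(3)
  by auto

lemma Ld_taylor_bound:
  assumes "smooth_on S f" "\<And>t. 0 \<le> t \<Longrightarrow> t \<le> 1 \<Longrightarrow> y + t *\<^sub>R v \<in> S" "0 < m"
    "bdd_above {\<bar>pd is f x\<bar> | is x. length is = m + length is0 \<and> x \<in> S}"
  shows "\<bar>Ld f y v 0 is0 1 - (\<Sum>k<m. Ld f y v k is0 0 / fact k)\<bar>
           \<le> (\<Sum>j\<in>UNIV. \<bar>v$j\<bar>)^m * Mder S f (m + length is0)"
proof -
  obtain \<xi> where x: "0 < \<xi>" "\<xi> < 1"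
    "Ld f y v 0 is0 1 = (\<Sum>k<m. Ld f y v k is0 0 / fact k) + Ld f y v m is0 \<xi> / fact m"
    using Ld_taylor[OF assms(1,2,3)] by blast
  have b: "\<bar>Ld f y v m is0 \<xi>\<bar> \<le> (\<Sum>j\<in>UNIV. \<bar>v$j\<bar>)^m * Mder S f (m + length is0)"
    using Ld_bound[OF assms(2) assms(4)] x by auto
  have F: "(1::real) \<le> fact m" by (rule fact_ge_1)
  have "\<bar>Ld f y v m is0 \<xi> / fact m\<bar> \<le> \<bar>Ld f y v m is0 \<xi>\<bar>"
    using F by (simp add: divide_le_eq mult_le_cancel_left1)
  then show ?thesis using x b by simp
qed

lemma seg_in:
  fixes x0 :: "real^'n::finite"
  assumes "ball x0 r \<subseteq> S" "y \<in> ball x0 r" "y + v \<in> ball x0 r" "0 \<le> t" "t \<le> 1"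
  shows "y + t *\<^sub>R v \<in> S"
proof -
  have "(1 - t) *\<^sub>R y + t *\<^sub>R (y + v) \<in> ball x0 r"
    using convex_ball[of x0 r, unfolded convex_alt] assms(2-5) by blast
  moreover have "(1 - t) *\<^sub>R y + t *\<^sub>R (y + v) = y + t *\<^sub>R v" by (simp add: algebra_simps)
  ultimately show ?thesis using assms(1) by auto
qed

lemma in_ballI: "norm w < r \<Longrightarrow> x0 + w \<in> ball x0 r"
  by (simp add: dist_norm)

lemma sum_abs_le_norm:
  fixes v :: "real^'n::finite"
  shows "(\<Sum>j\<in>UNIV. \<bar>v$j\<bar>) \<le> real CARD('n) * norm v"
proof -
  have "(\<Sum>j\<in>UNIV. \<bar>v$j\<bar>) \<le> (\<Sum>j\<in>(UNIV::'n set). norm v)"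
    by (intro sum_mono component_le_norm_cart)
  then show ?thesis by simp
qed

lemma sum_abs_axis:
  "(\<Sum>j\<in>UNIV. \<bar>(s *\<^sub>R axis i (1::real))$j\<bar>) = \<bar>s\<bar>"
  by (simp add: axis_def if_distrib cong: if_cong)

lemma sum_axis:
  "(\<Sum>j\<in>UNIV. (s *\<^sub>R axis i (1::real))$j * X j) = s * X i"
proof -
  have "(\<Sum>j\<in>UNIV. (s *\<^sub>R axis i (1::real))$j * X j) = (\<Sum>j\<in>UNIV. if j = i then s * X j else 0)"
    by (rule sum.cong) (auto simp: axis_def)
  then show ?thesis by simp
qed

lemma Ld_axis:
  "Ld f y (s *\<^sub>R axis i 1) m is t = s^m * pd (replicate m i @ is) f (y + t *\<^sub>R (s *\<^sub>R axis i 1))"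
proof (induction m arbitrary: "is")
  case 0
  then show ?case by simp
next
  case (Suc m)
  have "Ld f y (s *\<^sub>R axis i 1) (Suc m) is t = s * Ld f y (s *\<^sub>R axis i 1) m (i#is) t"
    by (simp only: Ld.simps sum_axis)
  also have "\<dots> = s^Suc m * pd (replicate (Suc m) i @ is) f (y + t *\<^sub>R (s *\<^sub>R axis i 1))"
    using Suc.IH[of "i#is"] by (simp add: replicate_append_same[symmetric])
  finally show ?case .
qed

lemma small_le_zero:
  fixes D C \<delta> :: real
  assumes "0 < \<delta>" "0 \<le> C" "\<And>s. 0 < s \<Longrightarrow> s < \<delta> \<Longrightarrow> D \<le> C * s"
  shows "D \<le> 0"
proof (rule ccontr)
  assume "\<not> D \<le> 0"
  define s where "s = min (\<delta>/2) (D / (2 * (C + 1)))"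
  have s: "0 < s" "s < \<delta>" using assms(1,2) \<open>\<not> D \<le> 0\<close> by (auto simp: s_def)
  have "C * s \<le> C * (D / (2 * (C + 1)))" using assms(2) by (intro mult_left_mono) (auto simp: s_def)
  also have "\<dots> < D"
  proof -
    have cd: "0 \<le> C * D" using assms(2) \<open>\<not> D \<le> 0\<close> by simp
    have pos: "0 < 2*(C+1)" using assms(2) by simp
    have e: "D*(2*(C+1)) = 2*(C*D) + 2*D" by (simp add: algebra_simps)
    have "C*D < D*(2*(C+1))" unfolding e using cd \<open>\<not> D \<le> 0\<close> by linarith
    then show ?thesis using pos by (simp add: pos_divide_less_eq)
  qed
  finally show False using assms(3)[OF s] by linarith
qed

lemma delta_est:
  fixes f :: "real^'n::finite \<Rightarrow> real"
  assumes sm: "smooth_on S f" and B: "ball x0 \<rho> \<subseteq> S"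
    and b3: "bdd_above {\<bar>pd is f x\<bar> | is x. length is = 3 \<and> x \<in> S}"
    and s: "0 < s" "2 * s < \<rho>"
  shows "\<bar>f (x0 + s *\<^sub>R axis j 1 + s *\<^sub>R axis i 1) - f (x0 + s *\<^sub>R axis j 1)
          - f (x0 + s *\<^sub>R axis i 1) + f x0 - s^2 * pd [j,i] f x0\<bar>
         \<le> s^3 * ((1 + real CARD('n)) * Mder S f 3)"
proof -
  define a where "a = axis i (1::real)"
  define b where "b = axis j (1::real)"
  define y where "y = x0 + s *\<^sub>R b"
  define M where "M = Mder S f 3"
  define N where "N = real CARD('n)"
  have na: "norm (s *\<^sub>R a) = s" "norm (s *\<^sub>R b) = s" using s by (auto simp: a_def b_def)
  have n1: "norm a = 1" "norm b = 1" by (auto simp: a_def b_def)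
  have x0in: "x0 \<in> ball x0 \<rho>" using s by simp
  have yin: "y \<in> ball x0 \<rho>" unfolding y_def by (rule in_ballI) (use na s in auto)
  have "norm (s *\<^sub>R b + s *\<^sub>R a) < \<rho>" using norm_triangle_ineq[of "s *\<^sub>R b" "s *\<^sub>R a"] na s by linarith
  then have ysa: "y + s *\<^sub>R a \<in> ball x0 \<rho>" unfolding y_def using in_ballI by (metis add.assoc)
  have xsa: "x0 + s *\<^sub>R a \<in> ball x0 \<rho>" by (rule in_ballI) (use na s in auto)
  have x0S: "x0 \<in> S" using B x0in by blast
  have M0: "0 \<le> M" unfolding M_def using Mder_nonneg[OF b3, of "[i,i,i]" x0] x0S by auto
  have seg1: "\<And>t. 0 \<le> t \<Longrightarrow> t \<le> 1 \<Longrightarrow> y + t *\<^sub>R (s *\<^sub>R a) \<in> S" by (rule seg_in[OF B yin ysa])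
  have seg2: "\<And>t. 0 \<le> t \<Longrightarrow> t \<le> 1 \<Longrightarrow> x0 + t *\<^sub>R (s *\<^sub>R a) \<in> S" by (rule seg_in[OF B x0in xsa])
  have seg3: "\<And>t. 0 \<le> t \<Longrightarrow> t \<le> 1 \<Longrightarrow> x0 + t *\<^sub>R (s *\<^sub>R b) \<in> S"
    by (rule seg_in[OF B x0in]) (use yin y_def in auto)
  obtain \<xi>1 where x1: "0 < \<xi>1" "\<xi>1 < 1"
    "Ld f y (s *\<^sub>R a) 0 [] 1 = (\<Sum>k<2. Ld f y (s *\<^sub>R a) k [] 0 / fact k) + Ld f y (s *\<^sub>R a) 2 [] \<xi>1 / fact 2"
    using Ld_taylor[OF sm seg1, of 2 "[]"] by auto
  have e1: "f (y + s *\<^sub>R a) = f y + s * pd [i] f y + s^2/2 * pd [i,i] f (y + \<xi>1 *\<^sub>R (s *\<^sub>R a))"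
    using x1(3) unfolding a_def Ld_axis by (simp add: numeral_2_eq_2)
  obtain \<xi>2 where x2: "0 < \<xi>2" "\<xi>2 < 1"
    "Ld f x0 (s *\<^sub>R a) 0 [] 1 = (\<Sum>k<2. Ld f x0 (s *\<^sub>R a) k [] 0 / fact k) + Ld f x0 (s *\<^sub>R a) 2 [] \<xi>2 / fact 2"
    using Ld_taylor[OF sm seg2, of 2 "[]"] by auto
  have e2: "f (x0 + s *\<^sub>R a) = f x0 + s * pd [i] f x0 + s^2/2 * pd [i,i] f (x0 + \<xi>2 *\<^sub>R (s *\<^sub>R a))"
    using x2(3) unfolding a_def Ld_axis by (simp add: numeral_2_eq_2)
  have b3': "bdd_above {\<bar>pd is f x\<bar> | is x. length is = 2 + length [i] \<and> x \<in> S}" using b3 by simp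
  have e3: "\<bar>pd [i] f y - (pd [i] f x0 + s * pd [j,i] f x0)\<bar> \<le> s^2 * M"
    using Ld_taylor_bound[OF sm seg3 _ b3'] s unfolding b_def Ld_axis sum_abs_axis M_def y_def
    by (simp add: numeral_2_eq_2 numeral_3_eq_3)
  define p where "p = y + \<xi>1 *\<^sub>R (s *\<^sub>R a)"
  define q where "q = x0 + \<xi>2 *\<^sub>R (s *\<^sub>R a)"
  have npq: "norm (p - q) \<le> 2 * s"
  proof -
    have "p - q = s *\<^sub>R b + (\<xi>1 - \<xi>2) *\<^sub>R (s *\<^sub>R a)" unfolding p_def q_def y_def by (simp add: algebra_simps)
    also have "norm \<dots> \<le> s + \<bar>\<xi>1 - \<xi>2\<bar> * s"
      using norm_triangle_ineq[of "s *\<^sub>R b" "(\<xi>1 - \<xi>2) *\<^sub>R (s *\<^sub>R a)"] na n1 s by (simp add: abs_mult)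
    also have "\<dots> \<le> 2 * s" using x1 x2 s by (auto simp: abs_if intro: mult_right_le_one_le)
    finally show ?thesis .
  qed
  have pin: "p \<in> ball x0 \<rho>"
  proof -
    have "norm (s *\<^sub>R b + \<xi>1 *\<^sub>R (s *\<^sub>R a)) \<le> s + \<xi>1 * s"
      using norm_triangle_ineq[of "s *\<^sub>R b" "\<xi>1 *\<^sub>R (s *\<^sub>R a)"] na n1 x1 s by (simp add: abs_mult)
    also have "\<dots> < \<rho>" using x1 s by (smt (verit) mult_less_cancel_right2)
    finally show ?thesis unfolding p_def y_def using in_ballI by (metis add.assoc)
  qed
  have qin: "q \<in> ball x0 \<rho>"
  proof -
    have "norm (\<xi>2 *\<^sub>R (s *\<^sub>R a)) = \<xi>2 * s" using na n1 x2 s by (simp add: abs_mult)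
    also have "\<dots> < \<rho>" using x2 s by (smt (verit) mult_less_cancel_right2)
    finally show ?thesis unfolding q_def using in_ballI by metis
  qed
  have seg4: "\<And>t. 0 \<le> t \<Longrightarrow> t \<le> 1 \<Longrightarrow> q + t *\<^sub>R (p - q) \<in> S"
    by (rule seg_in[OF B qin]) (use pin in auto)
  have b3'': "bdd_above {\<bar>pd is f x\<bar> | is x. length is = 1 + length [i,i] \<and> x \<in> S}" using b3 by (simp add: numeral_3_eq_3)
  have e4: "\<bar>pd [i,i] f p - pd [i,i] f q\<bar> \<le> (\<Sum>k\<in>UNIV. \<bar>(p-q)$k\<bar>) * M"
    using Ld_taylor_bound[OF sm seg4 _ b3''] unfolding M_def by (simp add: numeral_3_eq_3)
  have e4': "\<bar>pd [i,i] f p - pd [i,i] f q\<bar> \<le> N * (2 * s) * M"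
  proof -
    have "(\<Sum>k\<in>UNIV. \<bar>(p-q)$k\<bar>) \<le> N * (2 * s)"
      using sum_abs_le_norm[of "p-q"] npq unfolding N_def
      by (smt (verit) mult_left_mono of_nat_0_le_iff)
    then show ?thesis using e4 M0 by (smt (verit) mult_right_mono)
  qed
  define P where "P = pd [j,i] f x0"
  have key: "f (y + s *\<^sub>R a) - f y - f (x0 + s *\<^sub>R a) + f x0 - s^2 * P
     = s * (pd [i] f y - (pd [i] f x0 + s * P)) + s^2/2 * (pd [i,i] f p - pd [i,i] f q)"
    unfolding e1 e2 p_def q_def by (simp add: algebra_simps power2_eq_square)
  have "\<bar>s * (pd [i] f y - (pd [i] f x0 + s * P)) + s^2/2 * (pd [i,i] f p - pd [i,i] f q)\<bar>
      \<le> s * (s^2 * M) + s^2/2 * (N * (2 * s) * M)"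
  proof -
    have 1: "\<bar>s * (pd [i] f y - (pd [i] f x0 + s * P))\<bar> \<le> s * (s^2 * M)"
      using e3 s unfolding P_def by (simp add: abs_mult)
    have 2: "\<bar>s^2/2 * (pd [i,i] f p - pd [i,i] f q)\<bar> \<le> s^2/2 * (N * (2 * s) * M)"
      using e4' s by (simp add: abs_mult)
    show ?thesis by (rule order_trans[OF abs_triangle_ineq add_mono[OF 1 2]])
  qed
  also have "\<dots> = s^3 * ((1 + N) * M)" by (simp add: algebra_simps power2_eq_square power3_eq_cube)
  finally show ?thesis using key unfolding y_def a_def b_def M_def N_def P_def by simp
qed

lemma clairaut:
  fixes f :: "real^'n::finite \<Rightarrow> real"
  assumes sm: "smooth_on S f" and B: "ball x0 \<rho> \<subseteq> S" and r: "0 < \<rho>"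
    and b3: "bdd_above {\<bar>pd is f x\<bar> | is x. length is = 3 \<and> x \<in> S}"
  shows "pd [j,i] f x0 = pd [i,j] f x0"
proof -
  define C where "C = (1 + real CARD('n)) * Mder S f 3"
  have x0S: "x0 \<in> S" using B r by auto
  have C0: "0 \<le> C" unfolding C_def using Mder_nonneg[OF b3, of "[i,i,i]" x0] x0S by auto
  define D where "D = pd [j,i] f x0 - pd [i,j] f x0"
  have "\<bar>D\<bar> \<le> 0"
  proof (rule small_le_zero[of "\<rho>/2" "2 * C"])
    show "0 < \<rho>/2" using r by simp
    show "0 \<le> 2 * C" using C0 by simp
    fix s :: real assume s: "0 < s" "s < \<rho>/2"
    then have s2: "2 * s < \<rho>" by simp
    note d1 = delta_est[OF sm B b3 s(1) s2, of j i]
    note d2 = delta_est[OF sm B b3 s(1) s2, of i j]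
    have eq: "x0 + s *\<^sub>R axis j 1 + s *\<^sub>R axis i 1 = x0 + s *\<^sub>R axis i 1 + s *\<^sub>R axis j (1::real)"
      by (simp add: algebra_simps)
    have "\<bar>s^2 * D\<bar> \<le> s^3 * C + s^3 * C"
      using d1 d2 unfolding eq C_def D_def by (smt (verit) right_diff_distrib)
    then have "s^2 * \<bar>D\<bar> \<le> s^2 * (2 * C * s)"
      by (simp add: abs_mult power3_eq_cube power2_eq_square algebra_simps)
    then show "\<bar>D\<bar> \<le> 2 * C * s"
      using s by (simp add: mult_le_cancel_left)
  qed
  then show ?thesis unfolding D_def by simp
qed

lemma R2:
  fixes m s r w q :: real
  assumes w: "0 < w" "w \<le> 1/9" and r: "0 < r" "r < w^6" and s: "0 \<le> s" and m: "4 < \<bar>m\<bar>"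
    and ms: "r/2 \<le> \<bar>m\<bar>* s" "\<bar>m\<bar>* s \<le> 2*r" and q: "w* s^2 \<le> q"
    and E: "\<bar>(1+m/2)*m*q\<bar> \<le> 3*r^3/(2*w) + \<bar>1+m/2\<bar> * s * r^2/w^2"
  shows False
proof -
  have a1: "\<bar>m\<bar>/4 \<le> \<bar>1+m/2\<bar>" using m by linarith
  have a2: "\<bar>1+m/2\<bar> \<le> \<bar>m\<bar>" using m by linarith
  have q0: "0 \<le> q" using q w s by (smt (verit) mult_nonneg_nonneg zero_le_power2)
  have "w*r^2/16 = w*(r/2)^2/4" by (simp add: power2_eq_square)
  also have "\<dots> \<le> w*(\<bar>m\<bar>* s)^2/4" using ms r w by (intro divide_right_mono mult_left_mono power_mono) auto
  also have "\<dots> = (\<bar>m\<bar>/4) * \<bar>m\<bar> * (w* s^2)" by (simp add: power2_eq_square)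
  also have "\<dots> \<le> \<bar>1+m/2\<bar> * \<bar>m\<bar> * q" using a1 q w s by (intro mult_mono) auto
  also have "\<dots> = \<bar>(1+m/2)*m*q\<bar>" using q0 by (simp add: abs_mult)
  finally have L: "w*r^2/16 \<le> \<bar>(1+m/2)*m*q\<bar>" .
  have "\<bar>1+m/2\<bar> * s * r^2/w^2 \<le> \<bar>m\<bar> * s * r^2/w^2" using a2 s w by (intro divide_right_mono mult_right_mono) auto
  also have "\<dots> \<le> 2*r*r^2/w^2" using ms r w by (intro divide_right_mono mult_right_mono) auto
  finally have R1: "\<bar>1+m/2\<bar> * s * r^2/w^2 \<le> 2*r^3/w^2" by (simp add: power3_eq_cube power2_eq_square)
  have R2: "3*r^3/(2*w) \<le> 2*r^3/w^2"
  proof -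
    have "3*r^3/(2*w) = (3*w/2) * r^3/w^2" using w by (simp add: field_simps power2_eq_square)
    also have "\<dots> \<le> 2 * r^3/w^2" using w r by (intro divide_right_mono mult_right_mono) auto
    finally show ?thesis .
  qed
  have "w*r^2/16 \<le> 4*r^3/w^2" using L E R1 R2 by linarith
  then have "w^3 \<le> 64*r" using w r by (simp add: field_simps power2_eq_square power3_eq_cube)
  also have "\<dots> < 64*w^6" using r by simp
  finally have "w^3 * 1 < w^3 * (64 * w^3)" by (simp add: power_add[symmetric] mult_ac)
  then have "1 < 64 * w^3" using w by (simp add: mult_less_cancel_left_pos)
  moreover have "w^3 \<le> (1/9)^3" using w by (intro power_mono) auto
  moreover have "(1/9::real)^3 = 1/729" by (simp add: power_divide)
  ultimately show False by linarith
qed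

lemma R1:
  fixes m s r w q :: real
  assumes w: "0 < w" "w \<le> 1/9" and r: "0 < r" "r < w^6" and s: "0 \<le> s" and m: "\<bar>m\<bar> \<le> 4"
    and ms: "r/2 \<le> \<bar>m\<bar>* s" and q: "w* s^2 \<le> q"
    and E: "\<bar>(1+m/2)*m*q\<bar> \<le> 3*r^3/(2*w) + \<bar>1+m/2\<bar> * s * r^2/w^2"
  shows "\<bar>m+2\<bar>* s + r^2/w \<le> s^2/w^6"
proof -
  have "\<bar>m\<bar>* s \<le> 4* s" using m s by (rule mult_right_mono)
  then have s8: "r \<le> 8* s" using ms by linarith
  have sp: "0 < s" using s8 r by linarith
  have b1: "\<bar>1+m/2\<bar> \<le> 3" using m by linarith
  have q0: "0 \<le> q" using q w s by (smt (verit) mult_nonneg_nonneg zero_le_power2)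
  have "\<bar>m+2\<bar>*w* s*r/4 = (\<bar>m+2\<bar>/2) * w * s * (r/2)" by simp
  also have "\<dots> \<le> (\<bar>m+2\<bar>/2) * w * s * (\<bar>m\<bar>* s)" using ms w s by (intro mult_left_mono) auto
  also have "\<dots> = (\<bar>m+2\<bar>/2) * \<bar>m\<bar> * (w* s^2)" by (simp add: power2_eq_square mult_ac)
  also have "\<dots> \<le> (\<bar>m+2\<bar>/2) * \<bar>m\<bar> * q" using q by (intro mult_left_mono) auto
  also have "\<dots> = \<bar>(1+m/2)*m*q\<bar>"
  proof -
    have "\<bar>m+2\<bar>/2 = \<bar>1+m/2\<bar>" by (simp add: abs_if field_simps)
    then show ?thesis using q0 by (simp add: abs_mult)
  qed
  finally have L: "\<bar>m+2\<bar>*w* s*r/4 \<le> \<bar>(1+m/2)*m*q\<bar>" .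
  have R: "\<bar>1+m/2\<bar> * s * r^2/w^2 \<le> 3 * s * r^2/w^2" using b1 s w by (intro divide_right_mono mult_right_mono) auto
  have "\<bar>m+2\<bar>*w* s*r/4 \<le> 3*r^3/(2*w) + 3 * s * r^2/w^2" using L E R by linarith
  moreover have "\<bar>m+2\<bar>*w* s*r/4 = (w*r/4) * (\<bar>m+2\<bar>* s)" by simp
  moreover have "3*r^3/(2*w) + 3 * s * r^2/w^2 = (w*r/4) * (6*r^2/w^2 + 12* s*r/w^3)" using w
    by (simp add: field_simps power2_eq_square power3_eq_cube)
  ultimately have "(w*r/4) * (\<bar>m+2\<bar>* s) \<le> (w*r/4) * (6*r^2/w^2 + 12* s*r/w^3)" by simp
  then have "\<bar>m+2\<bar>* s \<le> 6*r^2/w^2 + 12* s*r/w^3" using w r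
    by (simp add: mult_le_cancel_left_pos)
  also have "6*r^2/w^2 \<le> 48*r* s/w^3"
  proof -
    have "6*r^2/w^2 = (6*r*r*w)/w^3" using w by (simp add: field_simps power2_eq_square power3_eq_cube)
    also have "\<dots> \<le> (6*r*(8* s)*1)/w^3" using w r s8 by (intro divide_right_mono mult_mono) auto
    finally show ?thesis by simp
  qed
  finally have A: "\<bar>m+2\<bar>* s \<le> 60*r* s/w^3" by simp
  have "r* s \<le> (8* s)* s" using s8 s by (rule mult_right_mono)
  then have "60*r* s \<le> 480* s^2" by (simp add: power2_eq_square)
  then have "60*r* s/w^3 \<le> 480* s^2/w^3" using w by (simp add: divide_right_mono)
  have B: "r^2/w \<le> 64* s^2/w^3"
  proof -
    have "r^2/w = (r^2*w^2)/w^3" using w by (simp add: field_simps power2_eq_square power3_eq_cube)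
    also have "\<dots> \<le> ((8* s)^2*1)/w^3" using w r s8 by (intro divide_right_mono mult_mono power_mono) (auto simp: power_le_one)
    finally show ?thesis by (simp add: power2_eq_square)
  qed
  have C: "544* s^2/w^3 \<le> s^2/w^6"
  proof -
    have "w^3 \<le> (1/9)^3" using w by (intro power_mono) auto
    moreover have "(1/9::real)^3 = 1/729" by (simp add: power_divide)
    ultimately have "544 * w^3 \<le> 1" by linarith
    then have "s^2 * (544 * w^3) \<le> s^2 * 1" by (intro mult_left_mono) auto
    then have "544* s^2*w^3 \<le> s^2" by (simp add: mult_ac)
    moreover have "544* s^2/w^3 = (544* s^2*w^3)/w^6"
    proof -
      have e: "w^6 = w^3 * w^3" by (simp add: power_add[symmetric])
      have "w^3 \<noteq> 0" using w by simp
      have g: "\<And>z a::real. z \<noteq> 0 \<Longrightarrow> a/z = a*z/(z*z)" by (simp add: field_simps)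
      show ?thesis unfolding e by (rule g) fact
    qed
    ultimately show ?thesis using w by (simp add: divide_right_mono)
  qed
  show ?thesis using A B C \<open>60*r* s/w^3 \<le> 480* s^2/w^3\<close> by linarith
qed


lemma core:
  fixes g u h :: "real^'n::finite" and H :: "real^'n^'n" and \<mu> \<nu> w :: real
  assumes w: "0 < w" "w \<le> 1/9" "w \<le> \<nu>" "\<nu> \<le> 1"
    and pos: "\<And>v. \<nu> * (v \<bullet> v) \<le> v \<bullet> (H *v v)"
    and Hu: "H *v u = g"
    and Hb: "\<And>v. norm (H *v v) \<le> norm v / w"
    and r: "0 < norm h" "norm h < w^6"
    and E: "\<bar>g \<bullet> h + (h \<bullet> (H *v h))/2\<bar> \<le> norm h ^3 / w"
    and e: "norm (H *v h - \<mu> *\<^sub>R g) \<le> \<nu> * norm h^2 / w"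
  shows "norm (h + 2 *\<^sub>R u) \<le> inverse (w^8) * norm g ^ 2"
proof -
  define r where "r = norm h"
  define s where "s = norm u"
  define d where "d = h - \<mu> *\<^sub>R u"
  define ee where "ee = H *v h - \<mu> *\<^sub>R g"
  define q where "q = g \<bullet> u"
  have nu: "0 < \<nu>" using w by linarith
  have Hd: "H *v d = ee" unfolding d_def ee_def Hu[symmetric] by (simp add: algebra_simps)
  have nee: "norm ee \<le> \<nu> * r^2 / w" using e unfolding ee_def r_def .
  have nd: "norm d \<le> r^2 / w"
  proof -
    have "\<nu> * (norm d)^2 \<le> norm d * norm ee"
      using pos[of d] norm_cauchy_schwarz[of d ee] unfolding Hd by (simp add: power2_norm_eq_inner)
    then have "\<nu> * norm d \<le> norm ee"
      by (cases "norm d = 0") (auto simp: power2_eq_square mult_ac)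
    then have "\<nu> * norm d \<le> \<nu> * (r^2/w)" using nee by simp
    then show ?thesis using nu by (rule mult_left_le_imp_le)
  qed
  have r0: "0 < r" "r < w^6" using r unfolding r_def by auto
  have w5: "w^5 \<le> 1/2"
  proof -
    have "w^5 \<le> w^1" by (rule power_decreasing) (use w in auto)
    then show ?thesis using w by simp
  qed
  have rw: "r/w \<le> 1/2"
  proof -
    have "r < w^5 * w" using r0 by (simp add: power_Suc[symmetric] mult.commute)
    then have "r/w < w^5" using w by (simp add: divide_less_eq)
    then show ?thesis using w5 by linarith
  qed
  have nd2: "norm d \<le> r/2"
  proof -
    have "r^2/w = r * (r/w)" by (simp add: power2_eq_square)
    also have "\<dots> \<le> r * (1/2)" using rw r0 by (intro mult_left_mono) auto
    finally have "r^2/w \<le> r/2" by simp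
    then show ?thesis using nd by linarith
  qed
  have hd: "h = \<mu> *\<^sub>R u + d" unfolding d_def by simp
  have ms1: "r/2 \<le> \<bar>\<mu>\<bar> * s"
  proof -
    have "r \<le> norm (\<mu> *\<^sub>R u) + norm d" unfolding r_def using norm_triangle_ineq hd by metis
    then show ?thesis using nd2 unfolding s_def by simp
  qed
  have ms2: "\<bar>\<mu>\<bar> * s \<le> 2 * r"
  proof -
    have "norm (\<mu> *\<^sub>R u) \<le> norm h + norm d" using norm_triangle_ineq4[of h d] unfolding d_def by simp
    then show ?thesis using nd2 norm_ge_zero[of h] unfolding s_def r_def norm_scaleR real_norm_def by linarith
  qed
  have s0: "0 \<le> s" unfolding s_def by simp
  have qs: "\<nu> * s^2 \<le> q"
    using pos[of u] unfolding q_def s_def Hu by (simp add: power2_norm_eq_inner inner_commute)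
  have qw: "w * s^2 \<le> q" using qs w(3) by (smt (verit) mult_right_mono zero_le_power2)
  have ng: "norm g \<le> s / w" using Hb[of u] unfolding Hu s_def .
  have ngl: "\<nu> * s \<le> norm g"
  proof -
    have "\<nu> * s^2 \<le> s * norm g" using qs norm_cauchy_schwarz[of g u] unfolding q_def s_def by (simp add: mult.commute)
    then show ?thesis using s0 by (cases "s = 0") (auto simp: power2_eq_square mult_ac)
  qed
  have expr: "g \<bullet> h + (h \<bullet> (H *v h))/2 = (1 + \<mu>/2) * (\<mu> * q + g \<bullet> d) + (h \<bullet> ee)/2"
  proof -
    have Hh: "H *v h = \<mu> *\<^sub>R g + ee" unfolding ee_def by simp
    have gh: "g \<bullet> h = \<mu> * q + g \<bullet> d" unfolding q_def by (subst hd) (simp add: inner_add_right)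
    have "h \<bullet> (H *v h) = \<mu> * (g \<bullet> h) + h \<bullet> ee" unfolding Hh by (simp add: inner_add_right inner_commute)
    then show ?thesis unfolding gh by (simp add: algebra_simps)
  qed
  have gd: "\<bar>g \<bullet> d\<bar> \<le> s * r^2 / w^2"
  proof -
    have "\<bar>g \<bullet> d\<bar> \<le> norm g * norm d" by (rule Cauchy_Schwarz_ineq2)
    also have "\<dots> \<le> (s/w) * (r^2/w)" using ng nd w by (intro mult_mono) (auto simp: s_def)
    finally show ?thesis by (simp add: power2_eq_square)
  qed
  have he: "\<bar>h \<bullet> ee\<bar> \<le> r^3 / w"
  proof -
    have "\<bar>h \<bullet> ee\<bar> \<le> norm h * norm ee" by (rule Cauchy_Schwarz_ineq2)
    also have "\<dots> \<le> r * (\<nu> * r^2 / w)" using nee unfolding r_def by (intro mult_left_mono) auto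
    also have "\<dots> \<le> r * (1 * r^2 / w)" using w r0 by (intro mult_left_mono divide_right_mono mult_right_mono) auto
    finally show ?thesis by (simp add: power3_eq_cube power2_eq_square)
  qed
  have E': "\<bar>(1+\<mu>/2)*\<mu>*q\<bar> \<le> 3*r^3/(2*w) + \<bar>1+\<mu>/2\<bar> * s * r^2/w^2"
  proof -
    have a: "(1+\<mu>/2)*\<mu>*q = (g \<bullet> h + (h \<bullet> (H *v h))/2) - (1 + \<mu>/2) * (g \<bullet> d) - (h \<bullet> ee)/2"
      unfolding expr by (simp add: algebra_simps)
    have b: "\<bar>(1 + \<mu>/2) * (g \<bullet> d)\<bar> \<le> \<bar>1+\<mu>/2\<bar> * (s * r^2/w^2)"
      unfolding abs_mult using gd by (intro mult_left_mono) auto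
    have E0: "\<bar>g \<bullet> h + (h \<bullet> (H *v h))/2\<bar> \<le> r^3/w" using E unfolding r_def .
    show ?thesis unfolding a using b E0 he by (simp add: abs_triangle_ineq4)
  qed
  show ?thesis
  proof (cases "\<bar>\<mu>\<bar> \<le> 4")
    case True
    have A: "\<bar>\<mu>+2\<bar>* s + r^2/w \<le> s^2/w^6" by (rule R1[OF w(1,2) r0 s0 True ms1 qw E'])
    have "h + 2 *\<^sub>R u = (\<mu> + 2) *\<^sub>R u + d" unfolding d_def by (simp add: algebra_simps)
    then have "norm (h + 2 *\<^sub>R u) \<le> \<bar>\<mu>+2\<bar>* s + norm d"
      unfolding s_def by (metis norm_scaleR norm_triangle_ineq)
    also have "\<dots> \<le> s^2/w^6" using A nd by linarith
    also have "\<dots> \<le> inverse (w^8) * norm g ^ 2"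
    proof -
      have "w * s \<le> norm g" using ngl w(3) s0 by (smt (verit) mult_right_mono)
      then have "(w* s)^2 \<le> norm g ^2" using w s0 by (intro power_mono) auto
      then have "inverse (w^8) * (w* s)^2 \<le> inverse (w^8) * norm g ^2" using w by (intro mult_left_mono) auto
      moreover have "inverse (w^8) * (w* s)^2 = s^2/w^6"
      proof -
        have e8: "w^8 = w^6 * w^2" by (simp add: power_add[symmetric])
        show ?thesis unfolding e8 using w by (simp add: field_simps power_mult_distrib)
      qed
      ultimately show ?thesis by simp
    qed
    finally show ?thesis .
  next
    case False
    then have "4 < \<bar>\<mu>\<bar>" by simp
    from R2[OF w(1,2) r0 s0 this ms1 ms2 qw E'] show ?thesis ..
  qed
qed


lemma Ld_small:
  "Ld f y v 1 is 0 = (\<Sum>j\<in>UNIV. v$j * pd (j#is) f y)"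
  "Ld f y v 2 is 0 = (\<Sum>j\<in>UNIV. v$j * (\<Sum>k\<in>UNIV. v$k * pd (k#j#is) f y))"
  by (simp_all add: numeral_2_eq_2 del: pd.simps)

lemma main_fixed:
  fixes f :: "real^'n::finite \<Rightarrow> real" and c :: real
  assumes c_def: "c = 1 / (9 * real CARD('n)^3)"
    and S_def: "S = supball x0 \<rho>0"
    and w_def: "w = c * \<nu> / (1 + Mder S f 2 + Mder S f 3)"
    and sm: "smooth_on S f"
    and b2: "bdd_above {\<bar>pd is f x\<bar> | is x. length is = 2 \<and> x \<in> S}"
    and b3: "bdd_above {\<bar>pd is f x\<bar> | is x. length is = 3 \<and> x \<in> S}"
    and nu: "0 < \<nu>" "\<nu> < 1" and mge: "mat_ge_scalar (hess f x0) \<nu>"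
    and h: "0 < norm h" "norm h < min \<rho>0 (w ^ 6)"
    and fh: "\<bar>f (x0 + h) - f x0\<bar> \<le> norm h ^ 3"
    and gh: "norm (grad f (x0 + h) - l *\<^sub>R grad f x0) \<le> norm h ^ 2"
  shows "norm (h + 2 *\<^sub>R (matrix_inv (hess f x0) *v grad f x0)) \<le> inverse (w ^ 8) * norm (grad f x0) ^ 2"
proof -
  define N where "N = real CARD('n)"
  define M2 where "M2 = Mder S f 2"
  define M3 where "M3 = Mder S f 3"
  define K where "K = 1 + M2 + M3"
  define H where "H = hess f x0"
  define g where "g = grad f x0"
  define r where "r = norm h"
  define \<sigma> where "\<sigma> = (\<Sum>j\<in>UNIV. \<bar>h$j\<bar>)"
  have N1: "1 \<le> N" unfolding N_def by (simp add: Suc_le_eq)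
  have r0: "0 < r" "r < \<rho>0" "r < w^6" using h unfolding r_def by auto
  have rho: "0 < \<rho>0" using r0 by linarith
  have B: "ball x0 \<rho>0 \<subseteq> S"
  proof
    fix x assume "x \<in> ball x0 \<rho>0"
    then have "norm (x - x0) < \<rho>0" by (simp add: dist_norm norm_minus_commute)
    then show "x \<in> S" unfolding S_def supball_def using infnorm_le_norm[of "x - x0"] by simp
  qed
  have x0in: "x0 \<in> ball x0 \<rho>0" using rho by simp
  have x0S: "x0 \<in> S" using B x0in by blast
  have xhin: "x0 + h \<in> ball x0 \<rho>0" by (rule in_ballI) (use r0 r_def in auto)
  have seg: "\<And>t. 0 \<le> t \<Longrightarrow> t \<le> 1 \<Longrightarrow> x0 + t *\<^sub>R h \<in> S" by (rule seg_in[OF B x0in xhin])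
  have M20: "0 \<le> M2" unfolding M2_def using Mder_nonneg[OF b2, of "[undefined, undefined]" x0] x0S by auto
  have M30: "0 \<le> M3" unfolding M3_def using Mder_nonneg[OF b3, of "[undefined, undefined, undefined]" x0] x0S by auto
  have sym: "\<And>i j. pd [j,i] f x0 = pd [i,j] f x0" by (rule clairaut[OF sm B rho b3])
  have K1: "1 \<le> K" unfolding K_def using M20 M30 by linarith
  have c0: "0 < c" "c \<le> 1/9" unfolding c_def using N1[unfolded N_def] by (auto simp: field_simps)
  have wK: "w = c * \<nu> / K" unfolding w_def K_def M2_def M3_def ..
  have w0: "0 < w" unfolding wK using c0 nu K1 by simp
  have wc: "w \<le> c * \<nu>"
  proof -
    have "c * \<nu> / K \<le> c * \<nu> / 1" by (rule divide_left_mono) (use K1 c0 nu in auto)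
    then show ?thesis unfolding wK by simp
  qed
  have w19: "w \<le> 1/9"
  proof -
    have "c * \<nu> \<le> c" using c0 nu by (simp add: mult_le_cancel_left1)
    then show ?thesis using wc c0 by linarith
  qed
  have wnu: "w \<le> \<nu>"
  proof -
    have "c * \<nu> \<le> \<nu>" using c0 nu by (simp add: mult_le_cancel_right1)
    then show ?thesis using wc by linarith
  qed
  have nuw: "\<nu> / w = 9 * N^3 * K" unfolding wK c_def N_def using nu K1 N1[unfolded N_def] by (simp add: field_simps)
  have N3: "1 \<le> N^3" using N1 by simp
  have N3': "0 \<le> N^3" using N3 by linarith
  have k1: "1 + N^3 * M3 \<le> \<nu> / w"
  proof -
    have "0 \<le> N^3 * M3" using N3' M30 by simp
    then have "N^3 * M3 \<le> 9 * N^3 * M3" unfolding mult.assoc by linarith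
    moreover have "0 \<le> 9 * N^3 * M2" using N3' M20 by simp
    moreover have "1 \<le> 9 * N^3" using N3 by simp
    ultimately show ?thesis unfolding nuw K_def by (simp add: algebra_simps)
  qed
  have k2: "N^2 * M2 \<le> 1 / w"
  proof -
    have "N^2 \<le> N^3" using N1 by (simp add: power_increasing)
    then have "N^2 * M2 \<le> N^3 * M2" using M20 by (rule mult_right_mono)
    also have "\<dots> \<le> 9 * N^3 * K"
    proof -
      have a: "9*N^3*K = 9*N^3 + 9*(N^3*M2) + 9*(N^3*M3)" unfolding K_def by (simp add: algebra_simps)
      have "0 \<le> N^3*M2" "0 \<le> N^3*M3" using N3' M20 M30 by auto
      then show ?thesis unfolding a using N3' by linarith
    qed
    also have "\<dots> = \<nu> / w" using nuw by simp
    also have "\<dots> \<le> 1 / w" using nu w0 by (simp add: divide_right_mono)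
    finally show ?thesis .
  qed
  have \<sigma>0: "0 \<le> \<sigma>" unfolding \<sigma>_def by (simp add: sum_nonneg)
  have \<sigma>r: "\<sigma> \<le> N * r" unfolding \<sigma>_def N_def r_def by (rule sum_abs_le_norm)
  have \<sigma>2: "\<sigma>^2 \<le> N^2 * r^2" using power_mono[OF \<sigma>r \<sigma>0, of 2] by (simp add: power_mult_distrib)
  have \<sigma>3: "\<sigma>^3 \<le> N^3 * r^3" using power_mono[OF \<sigma>r \<sigma>0, of 3] by (simp add: power_mult_distrib)
  have b3': "bdd_above {\<bar>pd is f x\<bar> | is x. length is = 3 + length ([]::'n list) \<and> x \<in> S}" using b3 by simp
  have T1: "\<bar>f (x0 + h) - (f x0 + g \<bullet> h + (h \<bullet> (H *v h))/2)\<bar> \<le> \<sigma>^3 * M3"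
  proof -
    have t: "\<bar>Ld f x0 h 0 [] 1 - (\<Sum>k<3. Ld f x0 h k [] 0 / fact k)\<bar> \<le> \<sigma>^3 * M3"
      using Ld_taylor_bound[OF sm seg _ b3'] unfolding \<sigma>_def M3_def by simp
    have s3: "(\<Sum>k<3. Ld f x0 h k [] 0 / fact k) = Ld f x0 h 0 [] 0 + Ld f x0 h 1 [] 0 + Ld f x0 h 2 [] 0 / 2"
      by (simp add: eval_nat_numeral del: Ld.simps)
    have l1: "Ld f x0 h 1 [] 0 = g \<bullet> h"
      unfolding Ld_small g_def grad_def inner_vec_def by (simp add: mult.commute del: pd.simps)
    have l2: "Ld f x0 h 2 [] 0 = h \<bullet> (H *v h)"
      unfolding Ld_small H_def hess_def inner_vec_def matrix_vector_mult_def
      by (simp add: sym sum_distrib_left mult_ac del: pd.simps)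
    show ?thesis using t unfolding s3 l1 l2 by simp
  qed
  have E: "\<bar>g \<bullet> h + (h \<bullet> (H *v h))/2\<bar> \<le> norm h ^ 3 / w"
  proof -
    have "\<bar>g \<bullet> h + (h \<bullet> (H *v h))/2\<bar> \<le> r^3 + \<sigma>^3 * M3" using T1 fh unfolding g_def r_def by linarith
    also have "\<dots> \<le> r^3 + N^3 * r^3 * M3" using \<sigma>3 M30 by (simp add: mult_right_mono)
    also have "\<dots> = r^3 * (1 + N^3 * M3)" by (simp add: algebra_simps)
    also have "\<dots> \<le> r^3 * (\<nu>/w)" using k1 r0 by (intro mult_left_mono) auto
    also have "\<dots> \<le> r^3 * (1/w)" using nu w0 r0 by (intro mult_left_mono divide_right_mono) auto
    finally show ?thesis unfolding r_def by simp
  qed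
  have b3'': "bdd_above {\<bar>pd is f x\<bar> | is x. length is = 2 + length [i] \<and> x \<in> S}" for i :: 'n
    using b3 by simp
  have T2: "\<bar>(grad f (x0 + h) - g - H *v h)$i\<bar> \<le> \<sigma>^2 * M3" for i
  proof -
    have t: "\<bar>Ld f x0 h 0 [i] 1 - (\<Sum>k<2. Ld f x0 h k [i] 0 / fact k)\<bar> \<le> \<sigma>^2 * M3"
      using Ld_taylor_bound[OF sm seg _ b3''] unfolding \<sigma>_def M3_def by simp
    have s2: "(\<Sum>k<2. Ld f x0 h k [i] 0 / fact k) = Ld f x0 h 0 [i] 0 + Ld f x0 h 1 [i] 0"
      by (simp add: eval_nat_numeral del: Ld.simps)
    have l1: "Ld f x0 h 1 [i] 0 = (H *v h)$i"
      unfolding Ld_small H_def hess_def matrix_vector_mult_def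
      by (simp add: sym mult.commute del: pd.simps)
    show ?thesis using t unfolding s2 l1 by (simp add: g_def grad_def del: pd.simps)
  qed
  define \<mu> where "\<mu> = l - 1"
  have e: "norm (H *v h - \<mu> *\<^sub>R g) \<le> \<nu> * norm h^2 / w"
  proof -
    define E1 where "E1 = grad f (x0 + h) - g - H *v h"
    have eq: "H *v h - \<mu> *\<^sub>R g = (grad f (x0 + h) - l *\<^sub>R g) - E1"
      unfolding E1_def \<mu>_def by (simp add: algebra_simps)
    have "norm E1 \<le> (\<Sum>i\<in>UNIV. \<bar>E1$i\<bar>)" by (rule norm_le_l1_cart)
    also have "\<dots> \<le> (\<Sum>i\<in>(UNIV::'n set). \<sigma>^2 * M3)" unfolding E1_def by (intro sum_mono T2)
    also have "\<dots> = N * (\<sigma>^2 * M3)" unfolding N_def by simp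
    also have "\<dots> \<le> N * (N^2 * r^2 * M3)" using N1 \<sigma>2 M30 by (intro mult_left_mono mult_right_mono) auto
    finally have nE1: "norm E1 \<le> N^3 * r^2 * M3" by (simp add: power3_eq_cube power2_eq_square mult_ac)
    have "norm (H *v h - \<mu> *\<^sub>R g) \<le> norm (grad f (x0 + h) - l *\<^sub>R g) + norm E1"
      unfolding eq by (rule norm_triangle_ineq4)
    also have "\<dots> \<le> r^2 + N^3 * r^2 * M3" using gh nE1 unfolding g_def r_def by linarith
    also have "\<dots> = r^2 * (1 + N^3 * M3)" by (simp add: algebra_simps)
    also have "\<dots> \<le> r^2 * (\<nu>/w)" using k1 by (intro mult_left_mono) auto
    finally show ?thesis unfolding r_def by (simp add: mult_ac)
  qed
  have pos: "\<And>v. \<nu> * (v \<bullet> v) \<le> v \<bullet> (H *v v)" using mge unfolding mat_ge_scalar_def H_def by blast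
  have inv: "invertible H"
    unfolding invertible_left_inverse matrix_left_invertible_ker
  proof (intro allI impI)
    fix x assume "H *v x = 0"
    then have "\<nu> * (x \<bullet> x) \<le> 0" using pos[of x] by simp
    then have "x \<bullet> x \<le> 0" using nu by (simp add: mult_le_0_iff)
    then show "x = 0" by (metis inner_ge_zero inner_eq_zero_iff order_antisym)
  qed
  have "H ** matrix_inv H = mat 1 \<and> matrix_inv H ** H = mat 1"
    unfolding matrix_inv_def using inv[unfolded invertible_def] by (rule someI_ex)
  then have Hu: "H *v (matrix_inv H *v g) = g" by (simp add: matrix_vector_mul_assoc)
  have Hb: "\<And>v. norm (H *v v) \<le> norm v / w"
  proof -
    fix v :: "real^'n"
    have Hij: "\<bar>H$i$j\<bar> \<le> M2" for i j
      unfolding H_def hess_def M2_def using Mder_upper[OF b2, of "[i,j]" x0] x0S by simp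
    have row: "\<bar>(H *v v)$i\<bar> \<le> M2 * (N * norm v)" for i
    proof -
      have "\<bar>(H *v v)$i\<bar> \<le> (\<Sum>j\<in>UNIV. \<bar>H$i$j\<bar> * \<bar>v$j\<bar>)"
        unfolding matrix_vector_mult_def by (simp add: sum_abs[THEN order_trans] abs_mult)
      also have "\<dots> \<le> (\<Sum>j\<in>UNIV. M2 * \<bar>v$j\<bar>)" by (intro sum_mono mult_right_mono Hij) auto
      also have "\<dots> = M2 * (\<Sum>j\<in>UNIV. \<bar>v$j\<bar>)" by (simp add: sum_distrib_left)
      also have "\<dots> \<le> M2 * (N * norm v)" unfolding N_def using M20 by (intro mult_left_mono sum_abs_le_norm)
      finally show ?thesis .
    qed
    have "norm (H *v v) \<le> (\<Sum>i\<in>UNIV. \<bar>(H *v v)$i\<bar>)" by (rule norm_le_l1_cart)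
    also have "\<dots> \<le> (\<Sum>i\<in>(UNIV::'n set). M2 * (N * norm v))" by (intro sum_mono row)
    also have "\<dots> = (N^2 * M2) * norm v" unfolding N_def by (simp add: power2_eq_square mult_ac)
    also have "\<dots> \<le> (1/w) * norm v" using k2 by (intro mult_right_mono) auto
    finally show "norm (H *v v) \<le> norm v / w" by simp
  qed
  have w6: "norm h < w^6" using r0(3) unfolding r_def .
  have nu1: "\<nu> \<le> 1" using nu by simp
  show ?thesis
    using core[OF w0 w19 wnu nu1 pos Hu Hb h(1) w6 E e] unfolding H_def g_def .
qed

theorem lemma4p8:
  "\<exists>c::real. c > 0 \<and>
     (\<forall>(f :: real^'n::finite \<Rightarrow> real) x0 \<rho>0 \<nu> h l.
        let S = supball x0 \<rho>0;
            \<nu>1 = c * \<nu> / (1 + Mder S f 2 + Mder S f 3)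
        in smooth_on S f \<longrightarrow>
           bdd_above {\<bar>pd is f x\<bar> | is x. length is = 2 \<and> x \<in> S} \<longrightarrow>
           bdd_above {\<bar>pd is f x\<bar> | is x. length is = 3 \<and> x \<in> S} \<longrightarrow>
           0 < \<nu> \<longrightarrow> \<nu> < 1 \<longrightarrow> mat_ge_scalar (hess f x0) \<nu> \<longrightarrow>
           0 < norm h \<longrightarrow> norm h < min \<rho>0 (\<nu>1 ^ 6) \<longrightarrow>
           \<bar>f (x0 + h) - f x0\<bar> \<le> norm h ^ 3 \<longrightarrow>
           norm (grad f (x0 + h) - l *\<^sub>R grad f x0) \<le> norm h ^ 2 \<longrightarrow>
           norm (h + 2 *\<^sub>R (matrix_inv (hess f x0) *v grad f x0))
             \<le> inverse (\<nu>1 ^ 8) * norm (grad f x0) ^ 2)"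
    apply (rule exI[of _ "1 / (9 * real CARD('n)^3)"])
  apply (intro conjI)
   apply simp
  unfolding Let_def
  apply (intro allI impI)
  apply (rule main_fixed[OF refl refl refl])
            apply assumption+
  done

end
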